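(* Let $m\geq 1$. Every nonempty clopen subset of ${}^m\mathbb{A}$ is homeomorphic to ${}^m\mathbb{A}$.
   Context: Let $\mathbb{A}_0=\,]0,1]\times\{0\}$, $\mathbb{A}_1=[0,1[\,\times\{1\}$ and $\mathbb{A}=\mathbb{A}_0\cup\mathbb{A}_1$, ordered lexicographically: $\langle a,r\rangle\prec\langle b,s\rangle$ iff $a<b$, or $a=b$ and $r<s$; $\mathbb{A}$ (the double arrow space) carries the order topology, and ${}^m\mathbb{A}$ is its $m$-th power with the product topology. *)

theory Defs
  imports "HOL-Analysis.Analysis"
begin

definition double_arrow :: "(real \<times> real) set" where
  "double_arrow = ({0<..1} \<times> {0}) \<union> ({0..<1} \<times> {1})"

definition lex_less :: "real \<times> real \<Rightarrow> real \<times> real \<Rightarrow> bool" where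
  "lex_less p q \<longleftrightarrow> fst p < fst q \<or> (fst p = fst q \<and> snd p < snd q)"

definition double_arrow_topology :: "(real \<times> real) topology" where
  "double_arrow_topology = topology_generated_by
     (insert double_arrow
       ((\<lambda>a. {y \<in> double_arrow. lex_less y a}) ` double_arrow \<union>
        (\<lambda>a. {y \<in> double_arrow. lex_less a y}) ` double_arrow))"

definition double_arrow_power :: "nat \<Rightarrow> (nat \<Rightarrow> real \<times> real) topology" where
  "double_arrow_power m = product_topology (\<lambda>i. double_arrow_topology) {..<m}"

end

theory Submission
  imports Defs
begin

definition DD :: "real \<Rightarrow> real \<Rightarrow> (real \<times> real) set" where
  "DD c d = ({c<..d} \<times> {0}) \<union> ({c..<d} \<times> {1})"

lemma mem_DD: "(x, r) \<in> DD c d \<longleftrightarrow> (r = 0 \<and> c < x \<and> x \<le> d) \<or> (r = 1 \<and> c \<le> x \<and> x < d)"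
  by (auto simp: DD_def)

lemma A_DD: "double_arrow = DD 0 1"
  by (auto simp: DD_def double_arrow_def)

lemma DD_Int: "DD a b \<inter> DD c d = DD (max a c) (min b d)"
  by (auto simp: DD_def)

lemma DD_empty: "b \<le> a \<Longrightarrow> DD a b = {}"
  by (auto simp: DD_def)

lemma DD_Diff: "A - (DD c d) = A \<inter> (DD (-1) c \<union> DD d 2)" if "A \<subseteq> DD 0 1"
  using that by (auto simp: DD_def)

lemma DD_Diff2: "c < d \<Longrightarrow> DD a b - DD c d = DD a (min b c) \<union> DD (max a d) b"
  by (auto simp: DD_def)

lemma DD_Diff2_disj: "c < d \<Longrightarrow> DD a (min b c) \<inter> DD (max a d) b = {}"
  by (auto simp: DD_def)

definition aff :: "real \<Rightarrow> real \<Rightarrow> real \<times> real \<Rightarrow> real \<times> real" where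
  "aff \<alpha> \<beta> p = (\<alpha> * fst p + \<beta>, snd p)"

lemma aff_vimage: "\<alpha> > 0 \<Longrightarrow> aff \<alpha> \<beta> -` DD c d = DD ((c - \<beta>) / \<alpha>) ((d - \<beta>) / \<alpha>)"
  by (auto simp: DD_def aff_def field_simps)

lemma topspace_DA: "topspace double_arrow_topology = double_arrow"
  unfolding double_arrow_topology_def by (auto)

lemma lower_ray_nbhd:
  assumes "q \<in> double_arrow" "x \<in> double_arrow" "lex_less x q"
  shows "\<exists>c d. x \<in> DD c d \<and> double_arrow \<inter> DD c d \<subseteq> {y \<in> double_arrow. lex_less y q}"
proof -
  obtain t r where x: "x = (t, r)" by fastforce
  obtain e s where q: "q = (e, s)" by fastforce
  show ?thesis
  proof (cases "t < e")
    case True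
    then show ?thesis
      using assms unfolding x q
      by (rule_tac x=0 in exI, rule_tac x="(t+e)/2" in exI) (auto simp: double_arrow_def lex_less_def DD_def)
  next
    case False
    then show ?thesis
      using assms unfolding x q
      by (rule_tac x=0 in exI, rule_tac x="e" in exI) (auto simp: double_arrow_def lex_less_def DD_def)
  qed
qed

lemma upper_ray_nbhd:
  assumes "q \<in> double_arrow" "x \<in> double_arrow" "lex_less q x"
  shows "\<exists>c d. x \<in> DD c d \<and> double_arrow \<inter> DD c d \<subseteq> {y \<in> double_arrow. lex_less q y}"
proof -
  obtain t r where x: "x = (t, r)" by fastforce
  obtain e s where q: "q = (e, s)" by fastforce
  show ?thesis
  proof (cases "e < t")
    case True
    then show ?thesis
      using assms unfolding x q
      by (rule_tac x="(t+e)/2" in exI, rule_tac x="1" in exI) (auto simp: double_arrow_def lex_less_def DD_def)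
  next
    case False
    then show ?thesis
      using assms unfolding x q
      by (rule_tac x=e in exI, rule_tac x="1" in exI) (auto simp: double_arrow_def lex_less_def DD_def)
  qed
qed

definition nbhdP :: "(real \<times> real) set \<Rightarrow> bool" where
  "nbhdP U \<longleftrightarrow> U \<subseteq> double_arrow \<and> (\<forall>x\<in>U. \<exists>c d. x \<in> DD c d \<and> double_arrow \<inter> DD c d \<subseteq> U)"

lemma open_imp_nbhdP:
  assumes "openin double_arrow_topology U" shows "nbhdP U"
proof -
  have "generate_topology_on (insert double_arrow
       ((\<lambda>a. {y \<in> double_arrow. lex_less y a}) ` double_arrow \<union>
        (\<lambda>a. {y \<in> double_arrow. lex_less a y}) ` double_arrow)) U"
    using assms unfolding double_arrow_topology_def by (rule openin_topology_generated_by)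
  then show ?thesis
  proof induction
    case Empty
    then show ?case by (simp add: nbhdP_def)
  next
    case (Int a b)
    show ?case unfolding nbhdP_def
    proof (intro conjI ballI)
      show "a \<inter> b \<subseteq> double_arrow" using Int by (auto simp: nbhdP_def)
      fix x assume "x \<in> a \<inter> b"
      then obtain c d c' d' where "x \<in> DD c d" "double_arrow \<inter> DD c d \<subseteq> a"
        "x \<in> DD c' d'" "double_arrow \<inter> DD c' d' \<subseteq> b"
        using Int by (meson IntD1 IntD2 nbhdP_def)
      then show "\<exists>c d. x \<in> DD c d \<and> double_arrow \<inter> DD c d \<subseteq> a \<inter> b"
        by (rule_tac x="max c c'" in exI, rule_tac x="min d d'" in exI) (auto simp flip: DD_Int)
    qed
  next
    case (UN K)
    then show ?case by (fastforce simp: nbhdP_def)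
  next
    case (Basis s)
    then show ?case
    proof (elim insertE UnE imageE)
      assume "s = double_arrow"
      then show ?thesis unfolding nbhdP_def
        by (metis A_DD Int_absorb2 dual_order.refl)
    next
      fix q assume "s = {y \<in> double_arrow. lex_less y q}" "q \<in> double_arrow"
      then show ?thesis unfolding nbhdP_def using lower_ray_nbhd by auto
    next
      fix q assume "s = {y \<in> double_arrow. lex_less q y}" "q \<in> double_arrow"
      then show ?thesis unfolding nbhdP_def using upper_ray_nbhd by auto
    qed
  qed
qed

lemma DD_rays: assumes "0 \<le> c" "c < d" "d \<le> 1" shows "DD c d = (if c = 0 then double_arrow else {y \<in> double_arrow. lex_less (c,0) y}) \<inter>
           (if d = 1 then double_arrow else {y \<in> double_arrow. lex_less y (d,1)})"
proof (intro set_eqI)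
  fix p :: "real \<times> real"
  obtain t r where p: "p = (t,r)" by fastforce
  show "p \<in> DD c d \<longleftrightarrow> p \<in> (if c = 0 then double_arrow else {y \<in> double_arrow. lex_less (c,0) y}) \<inter>
           (if d = 1 then double_arrow else {y \<in> double_arrow. lex_less y (d,1)})"
    unfolding p using assms
    by (cases "c=0"; cases "d=1"; auto simp: double_arrow_def lex_less_def mem_DD)
qed

lemma open_DD0:
  assumes c: "0 \<le> c" "c < d" "d \<le> 1"
  shows "openin double_arrow_topology (DD c d)"
proof -
  let ?S = "insert double_arrow
       ((\<lambda>a. {y \<in> double_arrow. lex_less y a}) ` double_arrow \<union>
        (\<lambda>a. {y \<in> double_arrow. lex_less a y}) ` double_arrow)"
  have o: "openin double_arrow_topology s" if "s \<in> ?S" for s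
    unfolding double_arrow_topology_def using that by (rule topology_generated_by_Basis)
  have oA: "openin double_arrow_topology double_arrow"
    by (rule o) blast
  have oU: "openin double_arrow_topology {y \<in> double_arrow. lex_less q y}" if "q \<in> double_arrow" for q
    by (rule o) (use that in blast)
  have oL: "openin double_arrow_topology {y \<in> double_arrow. lex_less y q}" if "q \<in> double_arrow" for q
    by (rule o) (use that in blast)
  have L: "openin double_arrow_topology (if c = 0 then double_arrow else {y \<in> double_arrow. lex_less (c,0) y})"
  proof (cases "c = 0")
    case True
    then show ?thesis using oA by simp
  next
    case False
    then have "(c,0) \<in> double_arrow" using c by (simp add: double_arrow_def)
    then show ?thesis using False oU[of "(c,0)"] by simp
  qed
  have R: "openin double_arrow_topology (if d = 1 then double_arrow else {y \<in> double_arrow. lex_less y (d,1)})"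
  proof (cases "d = 1")
    case True
    then show ?thesis using oA by simp
  next
    case False
    then have "(d,1) \<in> double_arrow" using c by (simp add: double_arrow_def)
    then show ?thesis using False oL[of "(d,1)"] by simp
  qed
  show ?thesis
    unfolding DD_rays[OF c] by (rule openin_Int[OF L R])
qed

lemma open_DD: "openin double_arrow_topology (double_arrow \<inter> DD c d)"
proof -
  have eq: "double_arrow \<inter> DD c d = DD (max 0 c) (min 1 d)"
    by (simp add: A_DD DD_Int)
  show ?thesis
  proof (cases "max 0 c < min 1 d")
    case False
    then have "DD (max 0 c) (min 1 d) = {}" by (intro DD_empty) linarith
    then show ?thesis by (simp add: eq)
  next
    case True
    then show ?thesis unfolding eq by (intro open_DD0) auto
  qed
qed

lemma openin_DA_iff: "openin double_arrow_topology U \<longleftrightarrow> nbhdP U"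
proof
  assume N: "nbhdP U"
  show "openin double_arrow_topology U"
  proof (subst openin_subopen, intro ballI)
    fix x assume "x \<in> U"
    then obtain c d where cd: "x \<in> DD c d" "double_arrow \<inter> DD c d \<subseteq> U"
      using N unfolding nbhdP_def by blast
    have "x \<in> double_arrow" using N \<open>x \<in> U\<close> unfolding nbhdP_def by blast
    then show "\<exists>T. openin double_arrow_topology T \<and> x \<in> T \<and> T \<subseteq> U"
      using cd open_DD by blast
  qed
qed (rule open_imp_nbhdP)

lemma closed_DD: "closedin double_arrow_topology (double_arrow \<inter> DD c d)"
proof -
  have eq: "double_arrow - (double_arrow \<inter> DD c d) = (double_arrow \<inter> DD (-1) c) \<union> (double_arrow \<inter> DD d 2)"
  proof (intro set_eqI)
    fix p :: "real \<times> real"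
    obtain t r where p: "p = (t,r)" by fastforce
    show "p \<in> double_arrow - (double_arrow \<inter> DD c d) \<longleftrightarrow> p \<in> (double_arrow \<inter> DD (-1) c) \<union> (double_arrow \<inter> DD d 2)"
      unfolding p by (auto simp: double_arrow_def mem_DD)
  qed
  have "openin double_arrow_topology (double_arrow - (double_arrow \<inter> DD c d))"
    unfolding eq by (intro openin_Un open_DD)
  then show ?thesis
    unfolding closedin_def topspace_DA by blast
qed

lemma cont_into_DA:
  assumes "f \<in> topspace X \<rightarrow> double_arrow"
    and "\<And>c d. openin X {x \<in> topspace X. f x \<in> DD c d}"
  shows "continuous_map X double_arrow_topology f"
  unfolding continuous_map_def topspace_DA
proof (intro conjI allI impI)
  show "f \<in> topspace X \<rightarrow> double_arrow" by fact
  fix U assume "openin double_arrow_topology U"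
  then have N: "nbhdP U" by (simp add: openin_DA_iff)
  show "openin X {x \<in> topspace X. f x \<in> U}"
  proof (subst openin_subopen, intro ballI)
    fix x assume x: "x \<in> {x \<in> topspace X. f x \<in> U}"
    then obtain c d where cd: "f x \<in> DD c d" "double_arrow \<inter> DD c d \<subseteq> U"
      using N unfolding nbhdP_def by blast
    have "{y \<in> topspace X. f y \<in> DD c d} \<subseteq> {x \<in> topspace X. f x \<in> U}"
      using cd assms(1) by blast
    then show "\<exists>T. openin X T \<and> x \<in> T \<and> T \<subseteq> {x \<in> topspace X. f x \<in> U}"
      using x cd assms(2)[of c d] by blast
  qed
qed

lemma aff_comp: "\<alpha> \<noteq> 0 \<Longrightarrow> aff (1/\<alpha>) (-\<beta>/\<alpha>) (aff \<alpha> \<beta> x) = x"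
  by (simp add: aff_def field_simps)

lemma aff_comp2: "\<alpha> \<noteq> 0 \<Longrightarrow> aff \<alpha> \<beta> (aff (1/\<alpha>) (-\<beta>/\<alpha>) x) = x"
  by (simp add: aff_def field_simps)

lemma rescale_homeo:
  assumes ab: "0 \<le> a" "a < b" "b \<le> 1"
  shows "subtopology double_arrow_topology (DD a b) homeomorphic_space double_arrow_topology"
proof -
  define \<psi> where "\<psi> = aff (b - a) a"
  define \<phi> where "\<phi> = aff (1/(b-a)) (-a/(b-a))"
  have sub: "DD a b \<subseteq> double_arrow" using ab by (auto simp: A_DD DD_def)
  have ts: "topspace (subtopology double_arrow_topology (DD a b)) = DD a b"
    using sub by (simp add: topspace_DA Int_absorb1)
  have v\<psi>: "\<psi> -` DD c d = DD ((c - a) / (b - a)) ((d - a) / (b - a))" for c d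
    unfolding \<psi>_def using ab by (simp add: aff_vimage)
  have v\<phi>: "\<phi> -` DD c d = DD (a + c * (b - a)) (a + d * (b - a))" for c d
  proof -
    have e: "(x - (-a/(b-a))) / (1/(b-a)) = a + x * (b - a)" for x
      using ab by (simp add: field_simps)
    have pos: "1/(b-a) > 0" using ab by simp
    show ?thesis by (simp only: \<phi>_def aff_vimage[OF pos] e)
  qed
  have c1: "continuous_map (subtopology double_arrow_topology (DD a b)) double_arrow_topology \<phi>"
  proof (rule cont_into_DA)
    show "\<phi> \<in> topspace (subtopology double_arrow_topology (DD a b)) \<rightarrow> double_arrow"
      using v\<phi>[of 0 1] by (auto simp: ts A_DD)
    fix c d
    have "{x \<in> topspace (subtopology double_arrow_topology (DD a b)). \<phi> x \<in> DD c d}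
        = DD a b \<inter> (double_arrow \<inter> DD (a + c * (b - a)) (a + d * (b - a)))"
      using sub v\<phi>[of c d] by (auto simp: ts topspace_DA)
    then show "openin (subtopology double_arrow_topology (DD a b)) {x \<in> topspace (subtopology double_arrow_topology (DD a b)). \<phi> x \<in> DD c d}"
      by (simp add: openin_subtopology_Int2 open_DD)
  qed
  have c2: "continuous_map double_arrow_topology (subtopology double_arrow_topology (DD a b)) \<psi>"
    unfolding continuous_map_in_subtopology
  proof
    show "\<psi> \<in> topspace double_arrow_topology \<rightarrow> DD a b"
      using v\<psi>[of a b] ab by (auto simp: topspace_DA A_DD)
    show "continuous_map double_arrow_topology double_arrow_topology \<psi>"
    proof (rule cont_into_DA)
      show "\<psi> \<in> topspace double_arrow_topology \<rightarrow> double_arrow"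
        using v\<psi>[of a b] ab sub by (auto simp: topspace_DA A_DD)
      fix c d
      have "{x \<in> topspace double_arrow_topology. \<psi> x \<in> DD c d}
          = double_arrow \<inter> DD ((c - a) / (b - a)) ((d - a) / (b - a))"
        using v\<psi>[of c d] by (auto simp: topspace_DA)
      then show "openin double_arrow_topology {x \<in> topspace double_arrow_topology. \<psi> x \<in> DD c d}"
        by (simp add: open_DD)
    qed
  qed
  have "homeomorphic_maps (subtopology double_arrow_topology (DD a b)) double_arrow_topology \<phi> \<psi>"
  proof -
    have i1: "\<phi> (\<psi> x) = x" for x unfolding \<phi>_def \<psi>_def by (rule aff_comp) (use ab in simp)
    have i2: "\<psi> (\<phi> x) = x" for x unfolding \<phi>_def \<psi>_def by (rule aff_comp2) (use ab in simp)
    show ?thesis unfolding homeomorphic_maps_def using c1 c2 i1 i2 by blast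
  qed
  then show ?thesis unfolding homeomorphic_space_def by blast
qed

lemma compact_DA: "compact_space double_arrow_topology"
  unfolding compact_space_alt topspace_DA
proof (intro allI impI)
  fix \<U> assume U: "(\<forall>U\<in>\<U>. openin double_arrow_topology U) \<and> double_arrow \<subseteq> \<Union> \<U>"
  define T where "T = {t. 0 \<le> t \<and> t \<le> 1 \<and> (\<exists>F. finite F \<and> F \<subseteq> \<U> \<and> DD 0 t \<subseteq> \<Union>F)}"
  have T0: "0 \<in> T" unfolding T_def by (rule CollectI, rule conjI, simp, rule conjI, simp, rule exI[of _ "{}"]) (simp add: DD_empty)
  have Tb: "bdd_above T" unfolding T_def bdd_above_def by auto
  define s where "s = Sup T"
  have s0: "0 \<le> s" unfolding s_def using T0 Tb by (meson cSup_upper)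
  have s1: "s \<le> 1" unfolding s_def using T0 by (intro cSup_least) (blast, simp add: T_def)
  have cover: "\<exists>U\<in>\<U>. \<exists>c d. p \<in> DD c d \<and> double_arrow \<inter> DD c d \<subseteq> U" if pA: "p \<in> double_arrow" for p
  proof -
    obtain U where "U \<in> \<U>" "p \<in> U" using U pA by blast
    then show ?thesis using U unfolding openin_DA_iff nbhdP_def by blast
  qed
  have sT: "s \<in> T"
  proof (cases "s = 0")
    case True then show ?thesis using T0 by simp
  next
    case False
    then have "(s, 0) \<in> double_arrow" using s0 s1 by (simp add: double_arrow_def)
    then obtain U c d where U1: "U \<in> \<U>" "(s,0) \<in> DD c d" "double_arrow \<inter> DD c d \<subseteq> U"
      using cover by blast
    then have cs: "c < s" "s \<le> d" by (auto simp: mem_DD)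
    have "\<exists>t\<in>T. c < t" using less_cSup_iff[of T c] T0 Tb cs(1) unfolding s_def by blast
    then obtain t where t: "t \<in> T" "c < t" by blast
    then obtain F where F: "finite F" "F \<subseteq> \<U>" "DD 0 t \<subseteq> \<Union>F" unfolding T_def by blast
    have "DD 0 s \<subseteq> \<Union>(insert U F)"
    proof
      fix p assume p: "p \<in> DD 0 s"
      obtain x r where pxr: "p = (x, r)" by fastforce
      show "p \<in> \<Union>(insert U F)"
      proof (cases "p \<in> DD 0 t")
        case True then show ?thesis using F by blast
      next
        case False
        then have "p \<in> DD 0 1 \<inter> DD c d" using p cs s1 t unfolding pxr Int_iff mem_DD
          by linarith
        then have "p \<in> double_arrow \<inter> DD c d" by (simp add: A_DD)
        then show ?thesis using U1 by blast
      qed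
    qed
    then have "finite (insert U F) \<and> insert U F \<subseteq> \<U> \<and> DD 0 s \<subseteq> \<Union>(insert U F)"
      using F U1 by simp
    then show ?thesis unfolding T_def using s0 s1 by blast
  qed
  have s_eq: "s = 1"
  proof (rule ccontr)
    assume "s \<noteq> 1"
    then have "s < 1" using s1 by simp
    then have "(s, 1) \<in> double_arrow" using s0 by (simp add: double_arrow_def)
    then obtain U c d where U1: "U \<in> \<U>" "(s,1) \<in> DD c d" "double_arrow \<inter> DD c d \<subseteq> U"
      using cover by blast
    then have cs: "c \<le> s" "s < d" by (auto simp: mem_DD)
    obtain F where F: "finite F" "F \<subseteq> \<U>" "DD 0 s \<subseteq> \<Union>F" using sT unfolding T_def by blast
    define d' where "d' = min d 1"
    have "DD 0 d' \<subseteq> \<Union>(insert U F)"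
    proof
      fix p assume p: "p \<in> DD 0 d'"
      obtain x r where pxr: "p = (x, r)" by fastforce
      show "p \<in> \<Union>(insert U F)"
      proof (cases "p \<in> DD 0 s")
        case True then show ?thesis using F by blast
      next
        case False
        then have "p \<in> DD 0 1 \<inter> DD c d" using p cs s1 unfolding pxr d'_def Int_iff mem_DD
          by linarith
        then have "p \<in> double_arrow \<inter> DD c d" by (simp add: A_DD)
        then show ?thesis using U1 by blast
      qed
    qed
    then have "finite (insert U F) \<and> insert U F \<subseteq> \<U> \<and> DD 0 d' \<subseteq> \<Union>(insert U F)"
      using F U1 by simp
    moreover have "0 \<le> d'" "d' \<le> 1" using s0 cs unfolding d'_def by auto
    ultimately have "d' \<in> T" unfolding T_def by blast
    then have "d' \<le> s" unfolding s_def using Tb by (rule cSup_upper)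
    then show False using cs \<open>s < 1\<close> unfolding d'_def by simp
  qed
  show "\<exists>\<F>. finite \<F> \<and> \<F> \<subseteq> \<U> \<and> double_arrow \<subseteq> \<Union> \<F>"
  proof -
    obtain F where "finite F" "F \<subseteq> \<U>" "DD 0 1 \<subseteq> \<Union>F" using sT unfolding s_eq T_def by blast
    then show ?thesis unfolding A_DD by blast
  qed
qed

lemma cont_paste:
  assumes "closedin W U" "closedin W V" "topspace W \<subseteq> U \<union> V" "U \<inter> V = {}"
    and "continuous_map (subtopology W U) Z f" "continuous_map (subtopology W V) Z f'"
  shows "continuous_map W Z (\<lambda>x. if x \<in> U then f x else f' x)"
proof (rule pasting_lemma_closed[where I="{True,False}" and T="\<lambda>b. if b then U else V"
      and f="\<lambda>b. if b then f else f'"])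
  show "\<exists>j. j \<in> {True, False} \<and> x \<in> (if j then U else V) \<and> (if x \<in> U then f x else f' x) = (if j then f else f') x"
    if "x \<in> topspace W" for x
    using that assms(3) by (cases "x \<in> U") auto
qed (use assms in auto)

lemma paste_homeo:
  assumes cU: "closedin X U" and cV: "closedin X V" and dUV: "U \<inter> V = {}"
    and cP: "closedin Y P" and cQ: "closedin Y Q" and dPQ: "P \<inter> Q = {}"
    and hU: "subtopology X U homeomorphic_space subtopology Y P"
    and hV: "subtopology X V homeomorphic_space subtopology Y Q"
  shows "subtopology X (U \<union> V) homeomorphic_space subtopology Y (P \<union> Q)"
proof -
  obtain f g where fg: "homeomorphic_maps (subtopology X U) (subtopology Y P) f g"
    using hU unfolding homeomorphic_space_def by blast
  obtain f' g' where fg': "homeomorphic_maps (subtopology X V) (subtopology Y Q) f' g'"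
    using hV unfolding homeomorphic_space_def by blast
  have sU: "U \<subseteq> topspace X" "V \<subseteq> topspace X" "P \<subseteq> topspace Y" "Q \<subseteq> topspace Y"
    using cU cV cP cQ closedin_subset by auto
  define h where "h x = (if x \<in> U then f x else f' x)" for x
  define k where "k y = (if y \<in> P then g y else g' y)" for y
  have f1: "continuous_map (subtopology X U) (subtopology Y P) f"
    and g1: "continuous_map (subtopology Y P) (subtopology X U) g"
    and f2: "continuous_map (subtopology X V) (subtopology Y Q) f'"
    and g2: "continuous_map (subtopology Y Q) (subtopology X V) g'"
    using fg fg' unfolding homeomorphic_maps_def by auto
  have tU: "topspace (subtopology X U) = U" "topspace (subtopology X V) = V"
    "topspace (subtopology Y P) = P" "topspace (subtopology Y Q) = Q"
    using sU by auto
  have fim: "f x \<in> P" if "x \<in> U" for x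
    using continuous_map_image_subset_topspace[OF f1] that unfolding tU by blast
  have fim': "f' x \<in> Q" if "x \<in> V" for x
    using continuous_map_image_subset_topspace[OF f2] that unfolding tU by blast
  have gim: "g y \<in> U" if "y \<in> P" for y
    using continuous_map_image_subset_topspace[OF g1] that unfolding tU by blast
  have gim': "g' y \<in> V" if "y \<in> Q" for y
    using continuous_map_image_subset_topspace[OF g2] that unfolding tU by blast
  have gf: "g (f x) = x" if "x \<in> U" for x
    using fg that unfolding homeomorphic_maps_def tU by blast
  have fg1: "f (g x) = x" if "x \<in> P" for x
    using fg that unfolding homeomorphic_maps_def tU by blast
  have gf': "g' (f' x) = x" if "x \<in> V" for x
    using fg' that unfolding homeomorphic_maps_def tU by blast
  have fg1': "f' (g' x) = x" if "x \<in> Q" for x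
    using fg' that unfolding homeomorphic_maps_def tU by blast
  have ch: "continuous_map (subtopology X (U \<union> V)) (subtopology Y (P \<union> Q)) h"
    unfolding h_def
  proof (rule cont_paste)
    show "closedin (subtopology X (U \<union> V)) U" using cU by (simp add: closedin_subset_topspace)
    show "closedin (subtopology X (U \<union> V)) V" using cV by (simp add: closedin_subset_topspace)
    show "topspace (subtopology X (U \<union> V)) \<subseteq> U \<union> V" by simp
    show "U \<inter> V = {}" by fact
    have e1: "subtopology (subtopology X (U \<union> V)) U = subtopology X U"
      by (simp add: subtopology_subtopology Int_absorb1)
    have e2: "subtopology (subtopology X (U \<union> V)) V = subtopology X V"
      by (simp add: subtopology_subtopology Int_absorb1)
    show "continuous_map (subtopology (subtopology X (U \<union> V)) U) (subtopology Y (P \<union> Q)) f"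
      using f1 unfolding e1 continuous_map_in_subtopology by auto
    show "continuous_map (subtopology (subtopology X (U \<union> V)) V) (subtopology Y (P \<union> Q)) f'"
      using f2 unfolding e2 continuous_map_in_subtopology by auto
  qed
  have ck: "continuous_map (subtopology Y (P \<union> Q)) (subtopology X (U \<union> V)) k"
    unfolding k_def
  proof (rule cont_paste)
    show "closedin (subtopology Y (P \<union> Q)) P" using cP by (simp add: closedin_subset_topspace)
    show "closedin (subtopology Y (P \<union> Q)) Q" using cQ by (simp add: closedin_subset_topspace)
    show "topspace (subtopology Y (P \<union> Q)) \<subseteq> P \<union> Q" by simp
    show "P \<inter> Q = {}" by fact
    have e1: "subtopology (subtopology Y (P \<union> Q)) P = subtopology Y P"
      by (simp add: subtopology_subtopology Int_absorb1)
    have e2: "subtopology (subtopology Y (P \<union> Q)) Q = subtopology Y Q"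
      by (simp add: subtopology_subtopology Int_absorb1)
    show "continuous_map (subtopology (subtopology Y (P \<union> Q)) P) (subtopology X (U \<union> V)) g"
      using g1 unfolding e1 continuous_map_in_subtopology by auto
    show "continuous_map (subtopology (subtopology Y (P \<union> Q)) Q) (subtopology X (U \<union> V)) g'"
      using g2 unfolding e2 continuous_map_in_subtopology by auto
  qed
  have inv1: "k (h x) = x" if "x \<in> topspace (subtopology X (U \<union> V))" for x
  proof (cases "x \<in> U")
    case True
    then show ?thesis using fim gf unfolding h_def k_def by simp
  next
    case False
    then have "x \<in> V" using that by auto
    then have "f' x \<notin> P" using fim' dPQ by blast
    then show ?thesis using False gf' \<open>x \<in> V\<close> unfolding h_def k_def by simp
  qed
  have inv2: "h (k y) = y" if "y \<in> topspace (subtopology Y (P \<union> Q))" for y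
  proof (cases "y \<in> P")
    case True
    then show ?thesis using gim fg1 unfolding h_def k_def by simp
  next
    case False
    then have "y \<in> Q" using that by auto
    then have "g' y \<notin> U" using gim' dUV by blast
    then show ?thesis using False fg1' \<open>y \<in> Q\<close> unfolding h_def k_def by simp
  qed
  have "homeomorphic_maps (subtopology X (U \<union> V)) (subtopology Y (P \<union> Q)) h k"
    unfolding homeomorphic_maps_def using ch ck inv1 inv2 by blast
  then show ?thesis unfolding homeomorphic_space_def by blast
qed

lemma dbl_from_split:
  assumes "closedin Z P" "closedin Z Q" "P \<inter> Q = {}" "P \<union> Q = topspace Z"
    "subtopology Z P homeomorphic_space Z" "subtopology Z Q homeomorphic_space Z"
    "closedin X U" "closedin X V" "U \<inter> V = {}"
    "subtopology X U homeomorphic_space Z" "subtopology X V homeomorphic_space Z"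
  shows "subtopology X (U \<union> V) homeomorphic_space Z"
proof -
  have "subtopology X U homeomorphic_space subtopology Z P"
    using homeomorphic_space_trans[OF assms(10) homeomorphic_space_sym[THEN iffD1, OF assms(5)]] .
  moreover have "subtopology X V homeomorphic_space subtopology Z Q"
    using homeomorphic_space_trans[OF assms(11) homeomorphic_space_sym[THEN iffD1, OF assms(6)]] .
  ultimately have "subtopology X (U \<union> V) homeomorphic_space subtopology Z (P \<union> Q)"
    by (rule paste_homeo[OF assms(7,8,9,1,2,3)])
  then show ?thesis using assms(4) by simp
qed

lemma union_homeo:
  assumes dbl: "\<And>U V. closedin X U \<Longrightarrow> closedin X V \<Longrightarrow> U \<inter> V = {} \<Longrightarrow>
      subtopology X U homeomorphic_space Z \<Longrightarrow> subtopology X V homeomorphic_space Z \<Longrightarrow>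
      subtopology X (U \<union> V) homeomorphic_space Z"
    and fin: "finite C" and ne: "C \<noteq> {}" and dj: "disjoint C"
    and mem: "\<And>c. c \<in> C \<Longrightarrow> closedin X c \<and> subtopology X c homeomorphic_space Z"
  shows "subtopology X (\<Union>C) homeomorphic_space Z"
  using fin ne dj mem
proof (induction C rule: finite_ne_induct)
  case (singleton x)
  have "subtopology X x homeomorphic_space Z" using singleton.prems(2)[of x] by blast
  then show ?case by simp
next
  case (insert c F)
  have D: "\<forall>a\<in>insert c F. \<forall>b\<in>insert c F. a \<noteq> b \<longrightarrow> a \<inter> b = {}"
    using insert.prems(1) unfolding disjoint_def .
  have djF: "disjoint F" unfolding disjoint_def using D by blast
  have cy: "c \<inter> y = {}" if "y \<in> F" for y
  proof -
    have "c \<noteq> y" using that insert.hyps by blast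
    then show ?thesis using D that by blast
  qed
  have cF: "c \<inter> \<Union>F = {}" using cy by blast
  have memF: "closedin X y \<and> subtopology X y homeomorphic_space Z" if "y \<in> F" for y
    using insert.prems(2)[of y] that by simp
  have IH: "subtopology X (\<Union>F) homeomorphic_space Z"
    using insert.IH[OF djF memF] by blast
  have cl: "closedin X (\<Union>F)" using memF insert.hyps(1) by (intro closedin_Union) auto
  have c1: "closedin X c \<and> subtopology X c homeomorphic_space Z"
    using insert.prems(2)[of c] by simp
  have "subtopology X (c \<union> \<Union>F) homeomorphic_space Z"
    using dbl[OF _ cl cF _ IH] c1 by blast
  then show ?case by simp
qed

lemma semiring_decompose:
  assumes sr: "semiring_of_sets \<Omega> M" and fin: "finite F" and FM: "F \<subseteq> M"
  obtains Cs where "finite Cs" "disjoint Cs" "Cs \<subseteq> M" "{} \<notin> Cs" "\<Union>Cs = \<Union>F"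
proof -
  interpret semiring_of_sets \<Omega> M by (rule sr)
  interpret R: ring_of_sets \<Omega> generated_ring by (rule generating_ring)
  have "F \<subseteq> generated_ring" using FM generated_ringI_Basic by blast
  then have "\<Union>F \<in> generated_ring" using fin by (intro R.finite_Union)
  then obtain C where C: "finite C" "disjoint C" "C \<subseteq> M" "\<Union>F = \<Union>C"
    by (rule generated_ringE)
  show ?thesis
  proof (rule that)
    show "finite (C - {{}})" using C(1) by simp
    show "disjoint (C - {{}})" using C(2) by (rule pairwise_subset) blast
    show "C - {{}} \<subseteq> M" using C(3) by blast
    show "{} \<notin> C - {{}}" by blast
    show "\<Union>(C - {{}}) = \<Union>F" using C(4) by blast
  qed
qed

lemma clopen_homeo_generic:
  assumes cX: "compact_space X"
    and sr: "semiring_of_sets \<Omega> M"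
    and Mo: "\<And>B. B \<in> M \<Longrightarrow> openin X B \<and> closedin X B"
    and Mh: "\<And>B. B \<in> M \<Longrightarrow> B \<noteq> {} \<Longrightarrow> subtopology X B homeomorphic_space Z"
    and basis: "\<And>U x. openin X U \<Longrightarrow> x \<in> U \<Longrightarrow> \<exists>B\<in>M. x \<in> B \<and> B \<subseteq> U"
    and dbl: "\<And>U V. closedin X U \<Longrightarrow> closedin X V \<Longrightarrow> U \<inter> V = {} \<Longrightarrow>
      subtopology X U homeomorphic_space Z \<Longrightarrow> subtopology X V homeomorphic_space Z \<Longrightarrow>
      subtopology X (U \<union> V) homeomorphic_space Z"
    and cS: "closedin X S" and oS: "openin X S" and ne: "S \<noteq> {}"
  shows "subtopology X S homeomorphic_space Z"
proof -
  have cpt: "compactin X S" using cX cS by (rule closedin_compact_space)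
  define \<U> where "\<U> = {B \<in> M. B \<subseteq> S}"
  have "\<forall>U\<in>\<U>. openin X U" using Mo unfolding \<U>_def by blast
  moreover have "S \<subseteq> \<Union>\<U>"
  proof
    fix x assume "x \<in> S"
    then obtain B where "B \<in> M" "x \<in> B" "B \<subseteq> S" using basis[OF oS] by blast
    then show "x \<in> \<Union>\<U>" unfolding \<U>_def by blast
  qed
  ultimately obtain F where F: "finite F" "F \<subseteq> \<U>" "S \<subseteq> \<Union>F"
    using cpt unfolding compactin_def by meson
  have SF: "\<Union>F = S" using F unfolding \<U>_def by blast
  have FM: "F \<subseteq> M" using F unfolding \<U>_def by blast
  obtain Cs where Cs: "finite Cs" "disjoint Cs" "Cs \<subseteq> M" "{} \<notin> Cs" "\<Union>Cs = \<Union>F"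
    using semiring_decompose[OF sr F(1) FM] by blast
  have "subtopology X (\<Union>Cs) homeomorphic_space Z"
  proof (rule union_homeo[OF dbl Cs(1) _ Cs(2)])
    show "Cs \<noteq> {}" using Cs(5) SF ne by auto
    fix c assume "c \<in> Cs"
    then show "closedin X c \<and> subtopology X c homeomorphic_space Z"
      using Mo Mh Cs(3,4) by blast
  qed (assumption+)
  then show ?thesis using Cs(5) SF by simp
qed

definition M1 :: "(real \<times> real) set set" where
  "M1 = range (\<lambda>(c, d). double_arrow \<inter> DD c d)"

lemma semiring_M1: "semiring_of_sets double_arrow M1"
proof (unfold_locales)
  show "M1 \<subseteq> Pow double_arrow" unfolding M1_def by auto
  have "double_arrow \<inter> DD 1 0 = {}" by (simp add: DD_empty)
  then show "{} \<in> M1" unfolding M1_def by (metis (no_types, lifting) case_prod_conv rangeI)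
  fix a b assume a: "a \<in> M1" and b: "b \<in> M1"
  then obtain a1 a2 b1 b2 where ab: "a = double_arrow \<inter> DD a1 a2" "b = double_arrow \<inter> DD b1 b2"
    unfolding M1_def by auto
  have "a \<inter> b = double_arrow \<inter> DD (max a1 b1) (min a2 b2)"
    unfolding ab by (auto simp flip: DD_Int)
  then show "a \<inter> b \<in> M1" unfolding M1_def by (metis (no_types, lifting) case_prod_conv rangeI)
  show "\<exists>C\<subseteq>M1. finite C \<and> disjoint C \<and> a - b = \<Union> C"
  proof (cases "b1 < b2")
    case True
    let ?C = "{double_arrow \<inter> DD a1 (min a2 b1), double_arrow \<inter> DD (max a1 b2) a2}"
    have "a - b = \<Union>?C" unfolding ab using DD_Diff2[OF True, of a1 a2] by auto
    moreover have "disjoint ?C" using DD_Diff2_disj[OF True, of a1 a2]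
      by (auto simp: pairwise_def disjnt_def)
    moreover have "?C \<subseteq> M1" unfolding M1_def by (auto intro!: rangeI[of _ "(a1, min a2 b1)"] rangeI[of _ "(max a1 b2, a2)"])
    ultimately show ?thesis by blast
  next
    case False
    then have "DD b1 b2 = {}" by (simp add: DD_empty)
    then have "a - b = \<Union>{a}" unfolding ab by auto
    moreover have "disjoint {a}" by simp
    ultimately show ?thesis using a by blast
  qed
qed

lemma DD_homeo:
  assumes "double_arrow \<inter> DD c d \<noteq> {}"
  shows "subtopology double_arrow_topology (double_arrow \<inter> DD c d) homeomorphic_space double_arrow_topology"
proof -
  have eq: "double_arrow \<inter> DD c d = DD (max 0 c) (min 1 d)"
    by (simp add: A_DD DD_Int)
  have "max 0 c < min 1 d"
  proof (rule ccontr)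
    assume "\<not> max 0 c < min 1 d"
    then have "DD (max 0 c) (min 1 d) = {}" by (intro DD_empty) linarith
    then show False using assms eq by simp
  qed
  then show ?thesis unfolding eq by (intro rescale_homeo) auto
qed

lemma DD_sub: "0 \<le> a \<Longrightarrow> b \<le> 1 \<Longrightarrow> double_arrow \<inter> DD a b = DD a b"
  by (auto simp: A_DD DD_def)

lemma dbl_DA:
  assumes "closedin X U" "closedin X V" "U \<inter> V = {}"
    "subtopology X U homeomorphic_space double_arrow_topology" "subtopology X V homeomorphic_space double_arrow_topology"
  shows "subtopology X (U \<union> V) homeomorphic_space double_arrow_topology"
proof (rule dbl_from_split[OF _ _ _ _ _ _ assms])
  let ?P = "double_arrow \<inter> DD 0 (1/2)" and ?Q = "double_arrow \<inter> DD (1/2) 1"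
  show "closedin double_arrow_topology ?P" "closedin double_arrow_topology ?Q"
    by (rule closed_DD)+
  show "?P \<inter> ?Q = {}"
  proof (intro equalityI subsetI)
    fix p assume "p \<in> ?P \<inter> ?Q"
    moreover obtain t r where "p = (t, r)" by fastforce
    ultimately show "p \<in> {}" by (simp add: mem_DD) linarith
  qed simp
  show "?P \<union> ?Q = topspace double_arrow_topology"
  proof (intro set_eqI)
    fix p :: "real \<times> real"
    obtain t r where p: "p = (t, r)" by fastforce
    show "p \<in> ?P \<union> ?Q \<longleftrightarrow> p \<in> topspace double_arrow_topology"
      unfolding p topspace_DA A_DD Un_iff Int_iff mem_DD by linarith
  qed
  have "(1/4, 0) \<in> ?P" by (simp add: A_DD mem_DD)
  then show "subtopology double_arrow_topology ?P homeomorphic_space double_arrow_topology"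
    by (intro DD_homeo) blast
  have "(3/4, 0) \<in> ?Q" by (simp add: A_DD mem_DD)
  then show "subtopology double_arrow_topology ?Q homeomorphic_space double_arrow_topology"
    by (intro DD_homeo) blast
qed

lemma clopen_DA_homeo:
  assumes "closedin double_arrow_topology S" "openin double_arrow_topology S" "S \<noteq> {}"
  shows "subtopology double_arrow_topology S homeomorphic_space double_arrow_topology"
proof (rule clopen_homeo_generic[OF compact_DA semiring_M1 _ _ _ dbl_DA assms])
  fix B assume "B \<in> M1"
  then obtain c d where B: "B = double_arrow \<inter> DD c d" unfolding M1_def by auto
  show "openin double_arrow_topology B \<and> closedin double_arrow_topology B"
    unfolding B using open_DD closed_DD by blast
  assume "B \<noteq> {}"
  then show "subtopology double_arrow_topology B homeomorphic_space double_arrow_topology"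
    unfolding B by (rule DD_homeo)
next
  fix U x assume "openin double_arrow_topology U" "x \<in> U"
  then obtain c d where "x \<in> DD c d" "double_arrow \<inter> DD c d \<subseteq> U" "x \<in> double_arrow"
    unfolding openin_DA_iff nbhdP_def by blast
  moreover have "double_arrow \<inter> DD c d \<in> M1" unfolding M1_def by (metis (no_types, lifting) case_prod_conv rangeI)
  ultimately show "\<exists>B\<in>M1. x \<in> B \<and> B \<subseteq> U" by blast
qed (assumption+)

lemma product_homeo:
  assumes h: "\<And>i. i \<in> I \<Longrightarrow> X i homeomorphic_space Y i"
  shows "product_topology X I homeomorphic_space product_topology Y I"
proof -
  have "\<forall>i\<in>I. \<exists>f g. homeomorphic_maps (X i) (Y i) f g"
    using h unfolding homeomorphic_space_def by blast
  then obtain f g where fg: "\<And>i. i \<in> I \<Longrightarrow> homeomorphic_maps (X i) (Y i) (f i) (g i)"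
    by metis
  define F where "F x = (\<lambda>i\<in>I. f i (x i))" for x
  define G where "G y = (\<lambda>i\<in>I. g i (y i))" for y
  have cF: "continuous_map (product_topology X I) (product_topology Y I) F"
    unfolding continuous_map_componentwise
  proof
    show "F ` topspace (product_topology X I) \<subseteq> extensional I" unfolding F_def by auto
    show "\<forall>k\<in>I. continuous_map (product_topology X I) (Y k) (\<lambda>x. F x k)"
    proof
      fix k assume k: "k \<in> I"
      have "continuous_map (product_topology X I) (Y k) (f k \<circ> (\<lambda>x. x k))"
        using continuous_map_product_projection[OF k] fg[OF k]
        unfolding homeomorphic_maps_def by (intro continuous_map_compose) auto
      moreover have "(\<lambda>x. F x k) = f k \<circ> (\<lambda>x. x k)" using k unfolding F_def by (auto simp: fun_eq_iff)
      ultimately show "continuous_map (product_topology X I) (Y k) (\<lambda>x. F x k)" by simp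
    qed
  qed
  have cG: "continuous_map (product_topology Y I) (product_topology X I) G"
    unfolding continuous_map_componentwise
  proof
    show "G ` topspace (product_topology Y I) \<subseteq> extensional I" unfolding G_def by auto
    show "\<forall>k\<in>I. continuous_map (product_topology Y I) (X k) (\<lambda>x. G x k)"
    proof
      fix k assume k: "k \<in> I"
      have "continuous_map (product_topology Y I) (X k) (g k \<circ> (\<lambda>x. x k))"
        using continuous_map_product_projection[OF k] fg[OF k]
        unfolding homeomorphic_maps_def by (intro continuous_map_compose) auto
      moreover have "(\<lambda>x. G x k) = g k \<circ> (\<lambda>x. x k)" using k unfolding G_def by (auto simp: fun_eq_iff)
      ultimately show "continuous_map (product_topology Y I) (X k) (\<lambda>x. G x k)" by simp
    qed
  qed
  have i1: "G (F x) = x" if "x \<in> topspace (product_topology X I)" for x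
  proof
    fix i
    show "G (F x) i = x i"
    proof (cases "i \<in> I")
      case True
      then have "x i \<in> topspace (X i)" using that by (simp add: PiE_iff)
      then show ?thesis using True fg[OF True] unfolding F_def G_def homeomorphic_maps_def by simp
    next
      case False
      then show ?thesis using that unfolding G_def by (simp add: PiE_iff extensional_def)
    qed
  qed
  have i2: "F (G y) = y" if "y \<in> topspace (product_topology Y I)" for y
  proof
    fix i
    show "F (G y) i = y i"
    proof (cases "i \<in> I")
      case True
      then have "y i \<in> topspace (Y i)" using that by (simp add: PiE_iff)
      then show ?thesis using True fg[OF True] unfolding F_def G_def homeomorphic_maps_def by simp
    next
      case False
      then show ?thesis using that unfolding F_def by (simp add: PiE_iff extensional_def)
    qed
  qed
  have "homeomorphic_maps (product_topology X I) (product_topology Y I) F G"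
    unfolding homeomorphic_maps_def using cF cG i1 i2 by blast
  then show ?thesis unfolding homeomorphic_space_def by blast
qed

definition clopDA :: "(real \<times> real) set \<Rightarrow> bool" where
  "clopDA A \<longleftrightarrow> closedin double_arrow_topology A \<and> openin double_arrow_topology A"

definition M2 :: "nat \<Rightarrow> (nat \<Rightarrow> real \<times> real) set set" where
  "M2 m = {PiE {..<m} F | F. \<forall>i\<in>{..<m}. clopDA (F i)}"

lemma box_homeo:
  assumes F: "\<forall>i\<in>{..<m}. clopDA (F i)" and ne: "PiE {..<m} F \<noteq> {}"
  shows "subtopology (double_arrow_power m) (PiE {..<m} F) homeomorphic_space double_arrow_power m"
proof -
  have "subtopology (double_arrow_power m) (PiE {..<m} F) = product_topology (\<lambda>i. subtopology double_arrow_topology (F i)) {..<m}"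
    unfolding double_arrow_power_def by (rule subtopology_product_topology)
  moreover have "product_topology (\<lambda>i. subtopology double_arrow_topology (F i)) {..<m} homeomorphic_space double_arrow_power m"
    unfolding double_arrow_power_def
  proof (rule product_homeo)
    fix i assume i: "i \<in> {..<m}"
    have "F i \<noteq> {}" using ne i by (simp add: PiE_eq_empty_iff)
    then show "subtopology double_arrow_topology (F i) homeomorphic_space double_arrow_topology"
      using F i clopen_DA_homeo unfolding clopDA_def by blast
  qed
  ultimately show ?thesis by simp
qed

lemma clopDA_Int: "clopDA A \<Longrightarrow> clopDA B \<Longrightarrow> clopDA (A \<inter> B)"
  unfolding clopDA_def by auto

lemma clopDA_Diff: "clopDA A \<Longrightarrow> clopDA B \<Longrightarrow> clopDA (A - B)"
  unfolding clopDA_def by auto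

lemma clopDA_sub: "clopDA A \<Longrightarrow> A \<subseteq> double_arrow"
  unfolding clopDA_def using openin_subset topspace_DA by metis

lemma box_diff:
  fixes F G :: "nat \<Rightarrow> (real \<times> real) set" and m :: nat
  defines "C \<equiv> \<lambda>k. PiE {..<m} (\<lambda>i. if i < k then F i \<inter> G i else if i = k then F i - G i else F i)"
  shows "PiE {..<m} F - PiE {..<m} G = (\<Union>k\<in>{..<m}. C k)"
    and "\<And>k k'. k < k' \<Longrightarrow> k' < m \<Longrightarrow> C k \<inter> C k' = {}"
proof -
  show "PiE {..<m} F - PiE {..<m} G = (\<Union>k\<in>{..<m}. C k)"
  proof (intro equalityI subsetI)
    fix x assume x: "x \<in> PiE {..<m} F - PiE {..<m} G"
    then have "\<exists>i. i < m \<and> x i \<notin> G i" by (auto simp: PiE_iff)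
    define k where "k = (LEAST i. i < m \<and> x i \<notin> G i)"
    have k: "k < m" "x k \<notin> G k" using LeastI_ex[OF \<open>\<exists>i. i < m \<and> x i \<notin> G i\<close>] unfolding k_def by auto
    have lt: "x i \<in> G i" if "i < k" for i
      using not_less_Least[of i "\<lambda>i. i < m \<and> x i \<notin> G i"] that k(1) unfolding k_def[symmetric] by auto
    have "x \<in> C k" unfolding C_def using x k lt by (auto simp: PiE_iff)
    then show "x \<in> (\<Union>k\<in>{..<m}. C k)" using k by blast
  next
    fix x assume "x \<in> (\<Union>k\<in>{..<m}. C k)"
    then obtain k where k: "k < m" "x \<in> C k" by blast
    then have "x \<in> PiE {..<m} F" "x k \<notin> G k" unfolding C_def by (auto simp: PiE_iff split: if_splits)
    then show "x \<in> PiE {..<m} F - PiE {..<m} G" using k by (auto simp: PiE_iff)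
  qed
  fix k k' :: nat assume kk: "k < k'" "k' < m"
  show "C k \<inter> C k' = {}"
  proof (rule ccontr)
    assume "C k \<inter> C k' \<noteq> {}"
    then obtain x where x: "x \<in> C k" "x \<in> C k'" by blast
    have km: "k \<in> {..<m}" using kk by simp
    have "x k \<in> (if k < k then F k \<inter> G k else if k = k then F k - G k else F k)"
      using x(1) km unfolding C_def PiE_iff by blast
    moreover have "x k \<in> (if k < k' then F k \<inter> G k else if k = k' then F k - G k else F k)"
      using x(2) km unfolding C_def PiE_iff by blast
    ultimately show False using kk by simp
  qed
qed

lemma clopDA_A: "clopDA double_arrow"
  unfolding clopDA_def using closedin_topspace openin_topspace topspace_DA by metis

lemma clopDA_DD: "clopDA (double_arrow \<inter> DD c d)"
  unfolding clopDA_def using closed_DD open_DD by blast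

lemma semiring_M2:
  assumes m: "m \<ge> 1"
  shows "semiring_of_sets (PiE {..<m} (\<lambda>_. double_arrow)) (M2 m)"
proof (unfold_locales)
  show "M2 m \<subseteq> Pow (PiE {..<m} (\<lambda>_. double_arrow))"
  proof
    fix B assume "B \<in> M2 m"
    then obtain F where F: "B = PiE {..<m} F" "\<forall>i\<in>{..<m}. clopDA (F i)" unfolding M2_def by blast
    have "PiE {..<m} F \<subseteq> PiE {..<m} (\<lambda>_. double_arrow)"
      by (rule PiE_mono) (use F(2) clopDA_sub in blast)
    then show "B \<in> Pow (PiE {..<m} (\<lambda>_. double_arrow))" using F(1) by blast
  qed
  have "PiE {..<m} (\<lambda>_. {}) = ({} :: (nat \<Rightarrow> real \<times> real) set)" using m by (auto simp: PiE_eq_empty_iff intro!: exI[of _ 0])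
  moreover have "\<forall>i\<in>{..<m}. clopDA ((\<lambda>_. {}) i)" unfolding clopDA_def by simp
  ultimately show "{} \<in> M2 m" unfolding M2_def by blast
  fix a b assume a: "a \<in> M2 m" and b: "b \<in> M2 m"
  then obtain F G where F: "a = PiE {..<m} F" "\<forall>i\<in>{..<m}. clopDA (F i)"
    and G: "b = PiE {..<m} G" "\<forall>i\<in>{..<m}. clopDA (G i)"
    unfolding M2_def by blast
  have "a \<inter> b = PiE {..<m} (\<lambda>i. F i \<inter> G i)" unfolding F G by (rule PiE_Int)
  moreover have "\<forall>i\<in>{..<m}. clopDA (F i \<inter> G i)" using F G clopDA_Int by blast
  ultimately show "a \<inter> b \<in> M2 m" unfolding M2_def by blast
  define C where "C \<equiv> \<lambda>k. PiE {..<m} (\<lambda>i. if i < k then F i \<inter> G i else if i = k then F i - G i else F i)"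
  have bd1: "a - b = (\<Union>k\<in>{..<m}. C k)" unfolding F G C_def by (rule box_diff(1))
  have bd2: "C k \<inter> C k' = {}" if "k < k'" "k' < m" for k k' unfolding C_def by (rule box_diff(2)[OF that])
  have "C ` {..<m} \<subseteq> M2 m"
  proof
    fix B assume "B \<in> C ` {..<m}"
    then obtain k where "B = C k" by blast
    moreover have "\<forall>i\<in>{..<m}. clopDA (if i < k then F i \<inter> G i else if i = k then F i - G i else F i)"
      using F G clopDA_Int clopDA_Diff by auto
    ultimately show "B \<in> M2 m" unfolding M2_def C_def by blast
  qed
  moreover have "disjoint (C ` {..<m})"
  proof (rule pairwiseI)
    fix A B assume A: "A \<in> C ` {..<m}" and B: "B \<in> C ` {..<m}" and AB: "A \<noteq> B"
    then obtain k k' where kk: "A = C k" "B = C k'" "k < m" "k' < m" by blast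
    then have "k \<noteq> k'" using AB by blast
    then have "A \<inter> B = {}"
    proof (cases "k < k'")
      case True then show ?thesis using bd2 kk by blast
    next
      case False then have "k' < k" using \<open>k \<noteq> k'\<close> by simp
      then show ?thesis using bd2[of k' k] kk by blast
    qed
    then show "disjnt A B" unfolding disjnt_def .
  qed
  ultimately show "\<exists>C'\<subseteq>M2 m. finite C' \<and> disjoint C' \<and> a - b = \<Union> C'"
  proof -
    have "finite (C ` {..<m})" by simp
    moreover have "a - b = \<Union>(C ` {..<m})" using bd1 by simp
    ultimately show "\<exists>C'\<subseteq>M2 m. finite C' \<and> disjoint C' \<and> a - b = \<Union> C'"
      using \<open>C ` {..<m} \<subseteq> M2 m\<close> \<open>disjoint (C ` {..<m})\<close> by blast
  qed
qed

lemma halves_disj: "(double_arrow \<inter> DD 0 (1/2)) \<inter> (double_arrow \<inter> DD (1/2) 1) = {}"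
proof (intro equalityI subsetI)
  fix p assume "p \<in> (double_arrow \<inter> DD 0 (1/2)) \<inter> (double_arrow \<inter> DD (1/2) 1)"
  moreover obtain t r where "p = (t, r)" by fastforce
  ultimately show "p \<in> {}" by (simp add: mem_DD) linarith
qed simp

lemma halves_Un: "(double_arrow \<inter> DD 0 (1/2)) \<union> (double_arrow \<inter> DD (1/2) 1) = double_arrow"
proof (intro set_eqI)
  fix p :: "real \<times> real"
  obtain t r where p: "p = (t, r)" by fastforce
  show "p \<in> (double_arrow \<inter> DD 0 (1/2)) \<union> (double_arrow \<inter> DD (1/2) 1) \<longleftrightarrow> p \<in> double_arrow"
    unfolding p A_DD Un_iff Int_iff mem_DD by linarith
qed

lemma M2_clopen:
  assumes "B \<in> M2 m"
  shows "openin (double_arrow_power m) B \<and> closedin (double_arrow_power m) B"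
proof -
  obtain F where F: "B = PiE {..<m} F" "\<forall>i\<in>{..<m}. clopDA (F i)" using assms unfolding M2_def by blast
  have "openin (double_arrow_power m) (PiE {..<m} F)"
    unfolding double_arrow_power_def openin_PiE_gen using F(2) unfolding clopDA_def by simp
  moreover have "closedin (double_arrow_power m) (PiE {..<m} F)"
    unfolding double_arrow_power_def closedin_product_topology using F(2) unfolding clopDA_def by simp
  ultimately show ?thesis using F(1) by simp
qed

lemma basis_M2:
  assumes U: "openin (double_arrow_power m) U" and x: "x \<in> U"
  shows "\<exists>B\<in>M2 m. x \<in> B \<and> B \<subseteq> U"
proof -
  have "openin (product_topology (\<lambda>i. double_arrow_topology) {..<m}) U"
    using U unfolding double_arrow_power_def .
  then have "\<forall>x \<in> U. \<exists>V. finite {i \<in> {..<m}. V i \<noteq> topspace double_arrow_topology} \<and>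
                 (\<forall>i \<in> {..<m}. openin double_arrow_topology (V i)) \<and> x \<in> Pi\<^sub>E {..<m} V \<and> Pi\<^sub>E {..<m} V \<subseteq> U"
    by (simp only: openin_product_topology_alt)
  then have "\<exists>V. finite {i \<in> {..<m}. V i \<noteq> topspace double_arrow_topology} \<and>
                 (\<forall>i \<in> {..<m}. openin double_arrow_topology (V i)) \<and> x \<in> Pi\<^sub>E {..<m} V \<and> Pi\<^sub>E {..<m} V \<subseteq> U"
    using x by (rule bspec)
  then obtain V where V: "\<forall>i\<in>{..<m}. openin double_arrow_topology (V i)" "x \<in> PiE {..<m} V" "PiE {..<m} V \<subseteq> U"
    by (elim exE conjE) (rule that)
  have "\<exists>W. clopDA W \<and> x i \<in> W \<and> W \<subseteq> V i" if i: "i \<in> {..<m}" for i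
  proof -
    have oV: "openin double_arrow_topology (V i)" using V(1) i by blast
    have xi: "x i \<in> V i" using V(2) i by (simp add: PiE_iff)
    obtain c d where cd: "x i \<in> DD c d" "double_arrow \<inter> DD c d \<subseteq> V i"
      using oV xi unfolding openin_DA_iff nbhdP_def by blast
    have "x i \<in> double_arrow" using oV xi unfolding openin_DA_iff nbhdP_def by blast
    then show ?thesis using cd clopDA_DD by blast
  qed
  then have "\<forall>i\<in>{..<m}. \<exists>W. clopDA W \<and> x i \<in> W \<and> W \<subseteq> V i" by blast
  from bchoice[OF this] obtain G where G: "\<forall>i\<in>{..<m}. clopDA (G i) \<and> x i \<in> G i \<and> G i \<subseteq> V i"
    by (elim exE) (rule that)
  have cG: "\<forall>i\<in>{..<m}. clopDA (G i)" using G by blast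
  have "PiE {..<m} G \<in> M2 m" unfolding M2_def using cG by (intro CollectI exI[of _ G]) simp
  moreover have "x \<in> PiE {..<m} G"
  proof -
    have "x \<in> extensional {..<m}" using V(2) by (simp add: PiE_iff)
    moreover have "\<forall>i\<in>{..<m}. x i \<in> G i" using G by blast
    ultimately show ?thesis by (simp add: PiE_iff)
  qed
  moreover have "PiE {..<m} G \<subseteq> PiE {..<m} V"
  proof (rule PiE_mono)
    fix i assume "i \<in> {..<m}" then show "G i \<subseteq> V i" using G by blast
  qed
  then have "PiE {..<m} G \<subseteq> U" using V(3) by (rule subset_trans)
  ultimately show ?thesis by (intro bexI[where x="PiE {..<m} G"] conjI)
qed

lemma half_box:
  assumes m: "m \<ge> 1" and H: "H = double_arrow \<inter> DD 0 (1/2) \<or> H = double_arrow \<inter> DD (1/2) 1"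
  shows "PiE {..<m} (\<lambda>i. if i = 0 then H else double_arrow) \<in> M2 m"
    and "PiE {..<m} (\<lambda>i. if i = 0 then H else double_arrow) \<noteq> {}"
proof -
  have "\<forall>i\<in>{..<m}. clopDA (if i = 0 then H else double_arrow)"
    using H clopDA_DD clopDA_A by auto
  then show "PiE {..<m} (\<lambda>i. if i = 0 then H else double_arrow) \<in> M2 m" unfolding M2_def by blast
  have "H \<noteq> {}"
  proof -
    have "(1/4, 0) \<in> double_arrow \<inter> DD 0 (1/2)" "(3/4, 0) \<in> double_arrow \<inter> DD (1/2) 1"
      by (simp_all add: A_DD mem_DD)
    then show ?thesis using H by blast
  qed
  moreover have "double_arrow \<noteq> {}"
  proof -
    have "(1/2, 0) \<in> double_arrow" by (simp add: double_arrow_def)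
    then show ?thesis by blast
  qed
  ultimately show "PiE {..<m} (\<lambda>i. if i = 0 then H else double_arrow) \<noteq> {}"
    by (simp add: PiE_eq_empty_iff)
qed

lemma dbl_power:
  assumes m: "m \<ge> 1"
    and "closedin X U" "closedin X V" "U \<inter> V = {}"
    "subtopology X U homeomorphic_space double_arrow_power m" "subtopology X V homeomorphic_space double_arrow_power m"
  shows "subtopology X (U \<union> V) homeomorphic_space double_arrow_power m"
proof -
  define Fp where "Fp = (\<lambda>i::nat. if i = 0 then double_arrow \<inter> DD 0 (1/2) else double_arrow)"
  define Fq where "Fq = (\<lambda>i::nat. if i = 0 then double_arrow \<inter> DD (1/2) 1 else double_arrow)"
  define P where "P = PiE {..<m} Fp"
  define Q where "Q = PiE {..<m} Fq"
  have cFp: "\<forall>i\<in>{..<m}. clopDA (Fp i)" unfolding Fp_def using clopDA_DD clopDA_A by simp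
  have cFq: "\<forall>i\<in>{..<m}. clopDA (Fq i)" unfolding Fq_def using clopDA_DD clopDA_A by simp
  have P: "P \<in> M2 m" "P \<noteq> {}" unfolding P_def Fp_def using half_box[OF m] by blast+
  have Q: "Q \<in> M2 m" "Q \<noteq> {}" unfolding Q_def Fq_def using half_box[OF m] by blast+
  have hP: "subtopology (double_arrow_power m) P homeomorphic_space double_arrow_power m"
    unfolding P_def by (rule box_homeo[OF cFp]) (use P(2) P_def in simp)
  have hQ: "subtopology (double_arrow_power m) Q homeomorphic_space double_arrow_power m"
    unfolding Q_def by (rule box_homeo[OF cFq]) (use Q(2) Q_def in simp)
  have 0: "(0::nat) \<in> {..<m}" using m by simp
  have dPQ: "P \<inter> Q = {}"
  proof (rule ccontr)
    assume "P \<inter> Q \<noteq> {}"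
    then obtain x where x: "x \<in> P" "x \<in> Q" by blast
    have "x 0 \<in> Fp 0" using x(1) 0 unfolding P_def PiE_iff by blast
    moreover have "x 0 \<in> Fq 0" using x(2) 0 unfolding Q_def PiE_iff by blast
    ultimately show False using halves_disj unfolding Fp_def Fq_def by auto
  qed
  have ts: "topspace (double_arrow_power m) = PiE {..<m} (\<lambda>_. double_arrow)"
    unfolding double_arrow_power_def topspace_product_topology topspace_DA by simp
  have uPQ: "P \<union> Q = topspace (double_arrow_power m)"
    unfolding ts
  proof (intro equalityI subsetI)
    fix x assume "x \<in> P \<union> Q"
    moreover have "P \<subseteq> PiE {..<m} (\<lambda>_. double_arrow)" unfolding P_def
      by (rule PiE_mono) (auto simp: Fp_def)
    moreover have "Q \<subseteq> PiE {..<m} (\<lambda>_. double_arrow)" unfolding Q_def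
      by (rule PiE_mono) (auto simp: Fq_def)
    ultimately show "x \<in> PiE {..<m} (\<lambda>_. double_arrow)" by blast
  next
    fix x assume x': "x \<in> PiE {..<m} (\<lambda>_. double_arrow)"
    then have "x 0 \<in> double_arrow" using 0 unfolding PiE_iff by blast
    then have "x 0 \<in> double_arrow \<inter> DD 0 (1/2) \<or> x 0 \<in> double_arrow \<inter> DD (1/2) 1"
      using halves_Un by blast
    then have "x \<in> P \<or> x \<in> Q"
      using x' unfolding P_def Q_def PiE_iff Fp_def Fq_def by auto
    then show "x \<in> P \<union> Q" by blast
  qed
  show ?thesis
    by (rule dbl_from_split[OF M2_clopen[OF P(1), THEN conjunct2] M2_clopen[OF Q(1), THEN conjunct2]
          dPQ uPQ hP hQ assms(2-6)])
qed

theorem proposition3p2: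
  fixes m :: nat and S :: "(nat \<Rightarrow> real \<times> real) set"
  assumes "m \<ge> 1"
    and "openin (double_arrow_power m) S"
    and "closedin (double_arrow_power m) S"
    and "S \<noteq> {}"
  shows "subtopology (double_arrow_power m) S homeomorphic_space double_arrow_power m"
proof (rule clopen_homeo_generic[OF _ semiring_M2[OF assms(1)] M2_clopen _ basis_M2 dbl_power[OF assms(1)] assms(3,2,4)])
  show "compact_space (double_arrow_power m)"
    unfolding double_arrow_power_def compact_space_product_topology using compact_DA by simp
  fix B assume "B \<in> M2 m" "B \<noteq> {}"
  then show "subtopology (double_arrow_power m) B homeomorphic_space double_arrow_power m"
    unfolding M2_def using box_homeo by blast
qed (assumption+)

end
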